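(* Let $0<r<\min(n,m)$ and $Z=UGV^T\in\mathcal{M}_r(\mathbb{R}^{n\times m})$. Define on $\mathcal{U}_Z$ the operation $$\theta_Z^{-1}(X,Y,H)\ \star_Z\ \theta_Z^{-1}(X',Y',H'):=\theta_Z^{-1}(X+X',Y+Y',HH').$$ Then $(\mathcal{U}_Z,\star_Z)$ is a Lie group (with the analytic structure given by the chart $\theta_Z$) with identity element $UV^T$, and the map $\eta_Z:\mathcal{U}_Z\to\mathcal{G}_U\times\mathcal{G}_V\times\mathrm{GL}_r$, $\eta_Z(\theta_Z^{-1}(X,Y,H))=(\exp(U_\perp XU^+),\exp(V_\perp YV^+),H)$, is a Lie group isomorphism, where the target carries the product group structure.
   Context: $\mathcal{M}_r(\mathbb{R}^{a\times b})$: real $a\times b$ matrices of rank exactly $r$; $\mathrm{GL}_r$: invertible $r\times r$ matrices. For $A$ of full column rank, $A^+:=(A^TA)^{-1}A^T$. Here $U\in\mathcal{M}_r(\mathbb{R}^{n\times r})$, $V\in\mathcal{M}_r(\mathbb{R}^{m\times r})$, $G\in\mathrm{GL}_r$, and $U_\perp\in\mathcal{M}_{n-r}(\mathbb{R}^{n\times(n-r)})$, $V_\perp\in\mathcal{M}_{m-r}(\mathbb{R}^{m\times(m-r)})$ are fixed with $U^TU_\perp=0$, $V^TV_\perp=0$. $\mathcal{U}_Z:=\{(U+U_\perp X)H(V+V_\perp Y)^T: X\in\mathbb{R}^{(n-r)\times r},Y\in\mathbb{R}^{(m-r)\times r},H\in\mathrm{GL}_r\}$ and $\theta_Z:\mathcal{U}_Z\to\mathbb{R}^{(n-r)\times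 r}\times\mathbb{R}^{(m-r)\times r}\times\mathrm{GL}_r$ is the bijection with $\theta_Z^{-1}(X,Y,H)=(U+U_\perp X)H(V+V_\perp Y)^T$. For $W\in\mathcal{M}_r(\mathbb{R}^{k\times r})$ with fixed $W_\perp$, $\mathcal{G}_W:=\{\exp(W_\perp XW^+): X\in\mathbb{R}^{(k-r)\times r}\}$, a closed Lie subgroup of $\mathrm{GL}_k$ under matrix multiplication; $\exp$ is the matrix exponential. *)

theory Defs
  imports "HOL-Analysis.Analysis" "HOL-Algebra.Group"
begin

text \<open>Moore-Penrose type left inverse for full column rank: A^+ = (A^T A)^{-1} A^T.\<close>
definition pinv :: "real^'r^'n \<Rightarrow> real^'n^'r" where
  "pinv A = matrix_inv (transpose A ** A) ** transpose A"

text \<open>Matrix powers and the matrix exponential (the product on real^'n^'n as a type is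
componentwise, so the exponential must be defined via the matrix product).\<close>
fun mpow :: "real^'n^'n \<Rightarrow> nat \<Rightarrow> real^'n^'n" where
  "mpow A 0 = mat 1"
| "mpow A (Suc k) = A ** mpow A k"

definition mexp :: "real^'n^'n \<Rightarrow> real^'n^'n" where
  "mexp A = (\<Sum>k. (1 / fact k) *\<^sub>R mpow A k)"

definition GL :: "(real^'r^'r) set" where
  "GL = {H. invertible H}"

definition mat_grp :: "(real^'n^'n) set \<Rightarrow> (real^'n^'n) monoid" where
  "mat_grp S = \<lparr>carrier = S, mult = (\<lambda>A B. A ** B), one = mat 1\<rparr>"

definition GW :: "real^'r^'k \<Rightarrow> real^'p^'k \<Rightarrow> (real^'k^'k) set" where
  "GW W Wperp = range (\<lambda>X::real^'r^'p. mexp (Wperp ** X ** pinv W))"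

fun iter_dderiv :: "'a::real_normed_vector list \<Rightarrow> ('a \<Rightarrow> 'b::real_normed_vector) \<Rightarrow> 'a \<Rightarrow> 'b" where
  "iter_dderiv [] f = f"
| "iter_dderiv (v # vs) f = (\<lambda>x. frechet_derivative (iter_dderiv vs f) (at x) v)"

definition smooth_on :: "'a::euclidean_space set \<Rightarrow> ('a \<Rightarrow> 'b::euclidean_space) \<Rightarrow> bool" where
  "smooth_on S f \<longleftrightarrow> (\<forall>vs. \<forall>x\<in>S. iter_dderiv vs f differentiable (at x))"

definition real_analytic_on :: "'a::euclidean_space set \<Rightarrow> ('a \<Rightarrow> 'b::euclidean_space) \<Rightarrow> bool" where
  "real_analytic_on S f \<longleftrightarrow> open S \<and> smooth_on S f \<and>
     (\<forall>x\<in>S. \<exists>e>0. ball x e \<subseteq> S \<and>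
        (\<forall>h. norm h < e \<longrightarrow>
           (\<lambda>j. (1 / fact j) *\<^sub>R iter_dderiv (replicate j h) f x) sums f (x + h)))"

definition lie_group_chart ::
  "'g set \<Rightarrow> ('g \<Rightarrow> 'g \<Rightarrow> 'g) \<Rightarrow> 'g \<Rightarrow> ('g \<Rightarrow> 'e::euclidean_space) \<Rightarrow> 'e set \<Rightarrow> bool" where
  "lie_group_chart S m e \<phi> D \<longleftrightarrow>
     open D \<and> bij_betw \<phi> S D \<and>
     group \<lparr>carrier = S, mult = m, one = e\<rparr> \<and>
     real_analytic_on (D \<times> D)
       (\<lambda>z. \<phi> (m (inv_into S \<phi> (fst z)) (inv_into S \<phi> (snd z)))) \<and>
     real_analytic_on D
       (\<lambda>a. \<phi> (m_inv \<lparr>carrier = S, mult = m, one = e\<rparr> (inv_into S \<phi> a)))"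

definition analytic_on_subset :: "'a::euclidean_space set \<Rightarrow> ('a \<Rightarrow> 'b::euclidean_space) \<Rightarrow> bool" where
  "analytic_on_subset T f \<longleftrightarrow>
     (\<forall>y\<in>T. \<exists>W g. open W \<and> y \<in> W \<and> real_analytic_on W g \<and> (\<forall>z\<in>W \<inter> T. g z = f z))"

definition thetainv ::
  "real^'r^'n \<Rightarrow> real^'p^'n \<Rightarrow> real^'r^'m \<Rightarrow> real^'q^'m \<Rightarrow>
   (real^'r^'p) \<times> (real^'r^'q) \<times> (real^'r^'r) \<Rightarrow> real^'m^'n" where
  "thetainv U Uperp V Vperp XYH =
     (case XYH of (X, Y, H) \<Rightarrow> (U + Uperp ** X) ** H ** transpose (V + Vperp ** Y))"

definition param_dom :: "((real^'r^'p) \<times> (real^'r^'q) \<times> (real^'r^'r)) set" where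
  "param_dom = UNIV \<times> UNIV \<times> GL"

definition UZ :: "real^'r^'n \<Rightarrow> real^'p^'n \<Rightarrow> real^'r^'m \<Rightarrow> real^'q^'m \<Rightarrow> (real^'m^'n) set" where
  "UZ U Uperp V Vperp = thetainv U Uperp V Vperp ` param_dom"

definition thetaZ ::
  "real^'r^'n \<Rightarrow> real^'p^'n \<Rightarrow> real^'r^'m \<Rightarrow> real^'q^'m \<Rightarrow>
   real^'m^'n \<Rightarrow> (real^'r^'p) \<times> (real^'r^'q) \<times> (real^'r^'r)" where
  "thetaZ U Uperp V Vperp = inv_into param_dom (thetainv U Uperp V Vperp)"

definition starZ ::
  "real^'r^'n \<Rightarrow> real^'p^'n \<Rightarrow> real^'r^'m \<Rightarrow> real^'q^'m \<Rightarrow>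
   real^'m^'n \<Rightarrow> real^'m^'n \<Rightarrow> real^'m^'n" where
  "starZ U Uperp V Vperp A B =
     (case (thetaZ U Uperp V Vperp A, thetaZ U Uperp V Vperp B) of
        ((X, Y, H), (X', Y', H')) \<Rightarrow> thetainv U Uperp V Vperp (X + X', Y + Y', H ** H'))"

definition etaZ ::
  "real^'r^'n \<Rightarrow> real^'p^'n \<Rightarrow> real^'r^'m \<Rightarrow> real^'q^'m \<Rightarrow>
   real^'m^'n \<Rightarrow> (real^'n^'n) \<times> (real^'m^'m) \<times> (real^'r^'r)" where
  "etaZ U Uperp V Vperp A =
     (case thetaZ U Uperp V Vperp A of (X, Y, H) \<Rightarrow>
        (mexp (Uperp ** X ** pinv U), mexp (Vperp ** Y ** pinv V), H))"

end

theory Submission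
  imports Defs
begin


lemma norm_vec_sq: "(norm (x::'a::real_normed_vector^'n))^2 = (\<Sum>i\<in>UNIV. (norm (x$i))^2)"
  unfolding norm_vec_def L2_set_def by (simp add: sum_nonneg)

lemma norm_mv_le: "norm ((A::real^'n^'m) *v x) \<le> norm A * norm x"
proof -
  have "(norm (A *v x))^2 = (\<Sum>i\<in>UNIV. ((A$i) \<bullet> x)^2)"
    by (simp add: norm_vec_sq matrix_mult_dot)
  also have "\<dots> \<le> (\<Sum>i\<in>UNIV. (norm (A$i))^2 * (norm x)^2)"
  proof (rule sum_mono)
    fix i show "((A$i) \<bullet> x)^2 \<le> (norm (A$i))^2 * (norm x)^2"
    proof -
      have "\<bar>(A$i) \<bullet> x\<bar> \<le> norm (A$i) * norm x" by (rule Cauchy_Schwarz_ineq2)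
      then have "\<bar>(A$i) \<bullet> x\<bar>^2 \<le> (norm (A$i) * norm x)^2" by (rule power_mono) simp
      then show ?thesis by (simp add: power_mult_distrib)
    qed
  qed
  also have "\<dots> = (norm x)^2 * (\<Sum>i\<in>UNIV. (norm (A$i))^2)"
    by (simp add: sum_distrib_left mult.commute)
  also have "\<dots> = (norm A)^2 * (norm x)^2"
    by (simp only: norm_vec_sq[of A] mult.commute)
  also have "\<dots> = (norm A * norm x)^2" by (rule power_mult_distrib[symmetric])
  finally have "(norm (A *v x))^2 \<le> (norm A * norm x)^2" .
  then show ?thesis by (rule power2_le_imp_le) simp
qed

lemma mm_row: "((A::real^'n^'m) ** (B::real^'k^'n)) $ i = transpose B *v (A $ i)"
  unfolding matrix_matrix_mult_def matrix_vector_mult_def transpose_def vec_eq_iff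
  by (auto intro!: sum.cong)

lemma norm_transpose: "norm (transpose (A::real^'n^'m)) = norm A"
proof -
  have "(norm (transpose A))^2 = (\<Sum>j\<in>UNIV. \<Sum>i\<in>UNIV. (A$i$j)^2)"
    unfolding norm_vec_sq by (simp add: transpose_def)
  also have "\<dots> = (\<Sum>i\<in>UNIV. \<Sum>j\<in>UNIV. (A$i$j)^2)"
    by (rule sum.swap)
  also have "\<dots> = (norm A)^2"
    unfolding norm_vec_sq[of A] by (simp add: norm_vec_sq)
  finally show ?thesis by (simp add: power2_eq_iff_nonneg)
qed

lemma norm_mm_le: "norm ((A::real^'n^'m) ** B) \<le> norm A * norm B"
proof -
  have "(norm (A ** B))^2 = (\<Sum>i\<in>UNIV. (norm (transpose B *v (A$i)))^2)"
    by (simp add: norm_vec_sq mm_row)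
  also have "\<dots> \<le> (\<Sum>i\<in>UNIV. (norm B)^2 * (norm (A$i))^2)"
  proof (rule sum_mono)
    fix i
    have "norm (transpose B *v (A$i)) \<le> norm B * norm (A$i)"
      using norm_mv_le[of "transpose B" "A$i"] by (simp add: norm_transpose)
    then have "(norm (transpose B *v (A$i)))^2 \<le> (norm B * norm (A$i))^2" by (rule power_mono) simp
    then show "(norm (transpose B *v (A$i)))^2 \<le> (norm B)^2 * (norm (A$i))^2" by (simp add: power_mult_distrib)
  qed
  also have "\<dots> = (norm B)^2 * (\<Sum>i\<in>UNIV. (norm (A$i))^2)"
    by (simp add: sum_distrib_left)
  also have "\<dots> = (norm A)^2 * (norm B)^2"
    by (simp only: norm_vec_sq[of A] mult.commute)
  also have "\<dots> = (norm A * norm B)^2" by (rule power_mult_distrib[symmetric])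
  finally have "(norm (A ** B))^2 \<le> (norm A * norm B)^2" .
  then show ?thesis by (rule power2_le_imp_le) simp
qed

lemma matrix_add_rdistrib': "((B + C) ** A) = (B ** A) + (C ** A)"
  by (vector matrix_matrix_mult_def sum.distrib[symmetric] field_simps)

lemma bb_mm: "bounded_bilinear ((**) :: real^'n^'m \<Rightarrow> real^'k^'n \<Rightarrow> real^'k^'m)"
proof
  fix a a' :: "real^'n^'m" and b b' :: "real^'k^'n" and r :: real
  show "(a + a') ** b = a ** b + a' ** b" by (simp add: matrix_add_rdistrib')
  show "a ** (b + b') = a ** b + a ** b'" by (simp add: matrix_add_ldistrib)
  show "(r *\<^sub>R a) ** b = r *\<^sub>R (a ** b)" by (rule scalar_matrix_assoc[symmetric])
  show "a ** (r *\<^sub>R b) = r *\<^sub>R (a ** b)" by (simp add: matrix_scalar_ac scalar_matrix_assoc)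
  show "\<exists>K. \<forall>a b. norm ((a::real^'n^'m) ** (b::real^'k^'n)) \<le> norm a * norm b * K"
    by (rule exI[of _ 1]) (simp add: norm_mm_le)
qed

lemmas mm_simps = bounded_bilinear.diff_left[OF bb_mm] bounded_bilinear.diff_right[OF bb_mm]
  bounded_bilinear.minus_left[OF bb_mm] bounded_bilinear.minus_right[OF bb_mm]
  bounded_bilinear.zero_left[OF bb_mm] bounded_bilinear.zero_right[OF bb_mm]
  bounded_bilinear.add_left[OF bb_mm] bounded_bilinear.add_right[OF bb_mm]




lemma minv_both: "invertible (A::real^'n^'n) \<Longrightarrow> A ** matrix_inv A = mat 1 \<and> matrix_inv A ** A = mat 1"
  unfolding invertible_def matrix_inv_def by (rule someI_ex)

lemma minv_r: "invertible (A::real^'n^'n) \<Longrightarrow> A ** matrix_inv A = mat 1"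
  using minv_both by blast
lemma minv_l: "invertible (A::real^'n^'n) \<Longrightarrow> matrix_inv A ** A = mat 1"
  using minv_both by blast

lemma minv_unique: assumes "(A::real^'n^'n) ** B = mat 1" shows "invertible A" "matrix_inv A = B"
proof -
  show i: "invertible A" using assms invertible_right_inverse by blast
  have "matrix_inv A = matrix_inv A ** (A ** B)" by (simp add: assms)
  also have "\<dots> = B" by (simp add: matrix_mul_assoc minv_l[OF i])
  finally show "matrix_inv A = B" .
qed

lemma minv_invertible: "invertible (A::real^'n^'n) \<Longrightarrow> invertible (matrix_inv A)"
  using minv_l invertible_right_inverse by blast

lemma near_invertible:
  fixes H k :: "real^'n^'n"
  assumes H: "invertible H" and small: "norm k * norm (matrix_inv H) < 1"
  shows "invertible (H + k)"
proof -
  define M where "M = matrix_inv H ** k"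
  have nM: "norm M < 1" unfolding M_def
    using norm_mm_le[of "matrix_inv H" k] small by (simp add: mult.commute)
  have "\<forall>x. (mat 1 + M) *v x = 0 \<longrightarrow> x = 0"
  proof (intro allI impI)
    fix x assume "(mat 1 + M) *v x = 0"
    then have "x = - (M *v x)" by (simp add: matrix_vector_mult_add_rdistrib eq_neg_iff_add_eq_0)
    then have "norm x \<le> norm M * norm x" using norm_mv_le[of M x] by (metis norm_minus_cancel)
    then show "x = 0" using nM
      by (metis mult_le_cancel_right1 norm_eq_zero norm_ge_zero not_le order_le_less)
  qed
  then have "invertible (mat 1 + M)"
    using matrix_left_invertible_ker invertible_left_inverse by blast
  moreover have "H ** (mat 1 + M) = H + k"
    by (simp add: M_def matrix_add_ldistrib matrix_mul_assoc minv_r[OF H])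
  ultimately show ?thesis using invertible_mult[OF H] by metis
qed

lemma open_GL: "open {H::real^'n^'n. invertible H}"
proof (rule openI)
  fix H :: "real^'n^'n" assume "H \<in> {H. invertible H}"
  then have H: "invertible H" by simp
  define e where "e = 1 / (norm (matrix_inv H) + 1)"
  have pos: "0 < norm (matrix_inv H) + 1" using norm_ge_zero[of "matrix_inv H"] by linarith
  then have e: "e > 0" unfolding e_def by simp
  have "ball H e \<subseteq> {H. invertible H}"
  proof
    fix y assume "y \<in> ball H e"
    then have d: "norm (y - H) < e" by (simp add: dist_norm norm_minus_commute)
    have "norm (y - H) * norm (matrix_inv H) \<le> e * norm (matrix_inv H)"
      using d by (simp add: mult_right_mono)
    also have "\<dots> < 1" unfolding e_def using pos by (simp add: field_simps)
    finally have "invertible (H + (y - H))" by (rule near_invertible[OF H])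
    then show "y \<in> {H. invertible H}" by simp
  qed
  then show "\<exists>e>0. ball H e \<subseteq> {H. invertible H}" using e by blast
qed

lemma bl_lmul: "bounded_linear (\<lambda>k. (A::real^'n^'m) ** (k::real^'p^'n))"
  by (rule bounded_bilinear.bounded_linear_right[OF bb_mm])
lemma bl_rmul: "bounded_linear (\<lambda>k. (k::real^'n^'m) ** (A::real^'p^'n))"
  by (rule bounded_bilinear.bounded_linear_left[OF bb_mm])

lemma minv_deriv:
  fixes H :: "real^'n^'n"
  assumes H: "invertible H"
  shows "(matrix_inv has_derivative (\<lambda>k. - (matrix_inv H ** k ** matrix_inv H))) (at H)"
proof -
  define Hi where "Hi = matrix_inv H"
  have bl: "bounded_linear (\<lambda>k. - (Hi ** k ** Hi))"
    by (intro bounded_linear_minus bounded_linear_compose[OF bl_rmul] bl_lmul)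
  define d where "d = 1 / (2 * norm Hi + 1)"
  have dpos: "0 < 2 * norm Hi + 1" using norm_ge_zero[of Hi] by linarith
  then have d: "d > 0" unfolding d_def by simp
  have bound: "norm (matrix_inv y - Hi - - (Hi ** (y - H) ** Hi)) / norm (y - H)
      \<le> 2 * norm Hi ^ 3 * norm (y - H)" if y: "y \<noteq> H" "dist y H < d" for y
  proof -
    define k where "k = y - H"
    have k0: "norm k > 0" using y by (simp add: k_def)
    have kd: "norm k < d" using y by (simp add: k_def dist_norm)
    have kHi: "norm k * norm Hi \<le> 1/2"
    proof -
      have "norm k * norm Hi \<le> d * norm Hi" using kd by (simp add: mult_right_mono)
      also have "\<dots> \<le> 1/2" unfolding d_def using dpos by (simp add: field_simps)
      finally show ?thesis .
    qed
    have yk: "y = H + k" by (simp add: k_def)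
    have iy: "invertible y" unfolding yk using kHi
      by (intro near_invertible[OF H]) (auto simp: Hi_def)
    define G where "G = matrix_inv y"
    have Gy: "G ** y = mat 1" and yG: "y ** G = mat 1" using minv_l[OF iy] minv_r[OF iy] by (auto simp: G_def)
    have HHi: "H ** Hi = mat 1" using minv_r[OF H] by (simp add: Hi_def)
    have eq1: "G = Hi - G ** k ** Hi"
    proof -
      have "G ** k ** Hi = G ** (y - H) ** Hi" by (simp add: k_def)
      also have "\<dots> = G ** y ** Hi - G ** (H ** Hi)"
        by (simp add: mm_simps matrix_mul_assoc)
      also have "\<dots> = Hi - G" by (simp add: Gy HHi)
      finally show ?thesis by simp
    qed
    have nG: "norm G \<le> 2 * norm Hi"
    proof -
      have "norm G \<le> norm Hi + norm (G ** k ** Hi)"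
        by (subst eq1) (rule norm_triangle_ineq4)
      also have "norm (G ** k ** Hi) \<le> norm G * norm k * norm Hi"
        by (meson norm_mm_le order_trans mult_right_mono norm_ge_zero)
      also have "norm G * norm k * norm Hi \<le> norm G * (1/2)"
        using mult_left_mono[OF kHi norm_ge_zero[of G]] by (simp add: mult.assoc)
      finally show ?thesis by simp
    qed
    have rem: "G - Hi - - (Hi ** k ** Hi) = G ** k ** Hi ** k ** Hi"
    proof -
      have "G - Hi = - (G ** k ** Hi)" using eq1 by (simp add: algebra_simps)
      then have "G - Hi - - (Hi ** k ** Hi) = (Hi - G) ** k ** Hi"
        by (simp add: mm_simps)
      also have "Hi - G = G ** k ** Hi" using eq1 by (simp add: algebra_simps)
      finally show ?thesis .
    qed
    have "norm (G ** k ** Hi ** k ** Hi) \<le> norm G * norm k * norm Hi * norm k * norm Hi"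
      by (meson norm_mm_le order_trans mult_right_mono norm_ge_zero)
    also have "\<dots> \<le> (2 * norm Hi) * norm k * norm Hi * norm k * norm Hi"
      using nG by (intro mult_right_mono) auto
    also have "\<dots> = 2 * norm Hi ^ 3 * norm (y - H) * norm k"
      by (simp add: k_def power3_eq_cube)
    finally have "norm (matrix_inv y - Hi - - (Hi ** (y - H) ** Hi)) \<le> 2 * norm Hi ^ 3 * norm (y - H) * norm k"
      using rem by (simp add: G_def k_def)
    then show ?thesis using k0 by (simp add: k_def divide_le_eq)
  qed
  have lim: "((\<lambda>y. 2 * norm Hi ^ 3 * norm (y - H)) \<longlongrightarrow> 0) (at H)"
  proof -
    have "((\<lambda>y. norm (y - H)) \<longlongrightarrow> norm (H - H)) (at H)"
      by (intro tendsto_intros)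
    then show ?thesis by (auto intro: tendsto_mult_right_zero)
  qed
  have ev: "eventually (\<lambda>y. norm (norm (matrix_inv y - Hi - - (Hi ** (y - H) ** Hi)) / norm (y - H))
     \<le> 2 * norm Hi ^ 3 * norm (y - H)) (at H)"
    unfolding eventually_at using d bound by auto
  show ?thesis
    unfolding has_derivative_iff_norm Hi_def[symmetric]
    using bl Lim_null_comparison[OF ev lim] by (simp add: matrix_inv_def Hi_def)
qed



lemma iter_family:
  assumes S: "open S"
    and F0: "\<And>x. x \<in> S \<Longrightarrow> F [] x = f x"
    and FD: "\<And>vs x. x \<in> S \<Longrightarrow> (F vs has_derivative (\<lambda>v. F (v # vs) x)) (at x)"
  shows "x \<in> S \<Longrightarrow> iter_dderiv vs f x = F vs x"
proof (induction vs arbitrary: x)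
  case Nil then show ?case by (simp add: F0)
next
  case (Cons v vs)
  have "(iter_dderiv vs f has_derivative (\<lambda>v. F (v # vs) x)) (at x)"
    by (rule has_derivative_transform_within_open[OF FD[OF Cons.prems] S Cons.prems])
       (simp add: Cons.IH)
  then show ?case by (simp add: frechet_derivative_at[symmetric])
qed

lemma iter_family_deriv:
  assumes S: "open S"
    and F0: "\<And>x. x \<in> S \<Longrightarrow> F [] x = f x"
    and FD: "\<And>vs x. x \<in> S \<Longrightarrow> (F vs has_derivative (\<lambda>v. F (v # vs) x)) (at x)"
    and x: "x \<in> S"
  shows "(iter_dderiv vs f has_derivative (\<lambda>v. F (v # vs) x)) (at x)"
  by (rule has_derivative_transform_within_open[OF FD[OF x] S x])
     (simp add: iter_family[OF S F0 FD])

lemma family_analytic: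
  assumes S: "open S"
    and F0: "\<And>x. x \<in> S \<Longrightarrow> F [] x = f x"
    and FD: "\<And>vs x. x \<in> S \<Longrightarrow> (F vs has_derivative (\<lambda>v. F (v # vs) x)) (at x)"
    and T: "\<And>x. x \<in> S \<Longrightarrow> \<exists>e>0. ball x e \<subseteq> S \<and> (\<forall>h. norm h < e \<longrightarrow>
           (\<lambda>j. (1 / fact j) *\<^sub>R F (replicate j h) x) sums f (x + h))"
  shows "real_analytic_on S f"
  unfolding real_analytic_on_def smooth_on_def
proof (intro conjI ballI allI)
  show "open S" by (rule S)
  fix vs x assume x: "x \<in> S"
  show "iter_dderiv vs f differentiable at x"
    using iter_family_deriv[OF S F0 FD x] by (rule differentiableI)
next
  fix x assume x: "x \<in> S"
  show "\<exists>e>0. ball x e \<subseteq> S \<and> (\<forall>h. norm h < e \<longrightarrow>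
           (\<lambda>j. (1 / fact j) *\<^sub>R iter_dderiv (replicate j h) f x) sums f (x + h))"
    using T[OF x] by (simp add: iter_family[OF S F0 FD x])
qed

lemma analytic_self_deriv:
  assumes "real_analytic_on S f" "x \<in> S"
  shows "(iter_dderiv vs f has_derivative (\<lambda>v. iter_dderiv (v # vs) f x)) (at x)"
proof -
  have "iter_dderiv vs f differentiable at x"
    using assms unfolding real_analytic_on_def smooth_on_def by blast
  then show ?thesis using frechet_derivative_works by force
qed

lemma analytic_cong:
  assumes A: "real_analytic_on S f" and eq: "\<And>x. x \<in> S \<Longrightarrow> f x = g x"
  shows "real_analytic_on S g"
proof -
  have S: "open S" using A by (simp add: real_analytic_on_def)
  show ?thesis
  proof (rule family_analytic[OF S, where F = "\<lambda>vs. iter_dderiv vs f"])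
    show "\<And>x. x \<in> S \<Longrightarrow> iter_dderiv [] f x = g x" by (simp add: eq)
    show "\<And>vs x. x \<in> S \<Longrightarrow> (iter_dderiv vs f has_derivative (\<lambda>v. iter_dderiv (v # vs) f x)) (at x)"
      by (rule analytic_self_deriv[OF A])
    fix x assume x: "x \<in> S"
    obtain e where e: "e > 0" "ball x e \<subseteq> S" and T: "\<forall>h. norm h < e \<longrightarrow>
           (\<lambda>j. (1 / fact j) *\<^sub>R iter_dderiv (replicate j h) f x) sums f (x + h)"
      using A x unfolding real_analytic_on_def by blast
    have "\<forall>h. norm h < e \<longrightarrow> (\<lambda>j. (1 / fact j) *\<^sub>R iter_dderiv (replicate j h) f x) sums g (x + h)"
    proof (intro allI impI)
      fix h :: 'a assume h: "norm h < e"
      then have "x + h \<in> S" using e(2) by (auto simp: dist_norm)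
      then show "(\<lambda>j. (1 / fact j) *\<^sub>R iter_dderiv (replicate j h) f x) sums g (x + h)"
        using T h eq by metis
    qed
    then show "\<exists>e>0. ball x e \<subseteq> S \<and> (\<forall>h. norm h < e \<longrightarrow>
           (\<lambda>j. (1 / fact j) *\<^sub>R iter_dderiv (replicate j h) f x) sums g (x + h))"
      using e by blast
  qed
qed

lemma sums_Pair': "f sums a \<Longrightarrow> g sums b \<Longrightarrow> (\<lambda>n. (f n, g n)) sums (a, b)"
proof -
  assume f: "f sums a" and g: "g sums b"
  have "(\<lambda>n. (\<Sum>i<n. (f i, g i))) = (\<lambda>n. ((\<Sum>i<n. f i), (\<Sum>i<n. g i)))"
    apply (rule ext) subgoal for n by (induct n) (auto simp: zero_prod_def) done
  then show ?thesis using f g unfolding sums_def by (simp add: tendsto_Pair)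
qed

lemma analytic_pair:
  assumes A: "real_analytic_on S f" and B: "real_analytic_on S g"
  shows "real_analytic_on S (\<lambda>x. (f x, g x))"
proof -
  have S: "open S" using A by (simp add: real_analytic_on_def)
  show ?thesis
  proof (rule family_analytic[OF S, where F = "\<lambda>vs x. (iter_dderiv vs f x, iter_dderiv vs g x)"])
    show "\<And>x. x \<in> S \<Longrightarrow> (iter_dderiv [] f x, iter_dderiv [] g x) = (f x, g x)" by simp
    show "\<And>vs x. x \<in> S \<Longrightarrow> ((\<lambda>x. (iter_dderiv vs f x, iter_dderiv vs g x)) has_derivative
        (\<lambda>v. (iter_dderiv (v # vs) f x, iter_dderiv (v # vs) g x))) (at x)"
      by (intro has_derivative_Pair analytic_self_deriv[OF A] analytic_self_deriv[OF B])
    fix x assume x: "x \<in> S"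
    obtain e1 where e1: "e1 > 0" "ball x e1 \<subseteq> S" and T1: "\<forall>h. norm h < e1 \<longrightarrow>
           (\<lambda>j. (1 / fact j) *\<^sub>R iter_dderiv (replicate j h) f x) sums f (x + h)"
      using A x unfolding real_analytic_on_def by blast
    obtain e2 where e2: "e2 > 0" "ball x e2 \<subseteq> S" and T2: "\<forall>h. norm h < e2 \<longrightarrow>
           (\<lambda>j. (1 / fact j) *\<^sub>R iter_dderiv (replicate j h) g x) sums g (x + h)"
      using B x unfolding real_analytic_on_def by blast
    show "\<exists>e>0. ball x e \<subseteq> S \<and> (\<forall>h. norm h < e \<longrightarrow>
           (\<lambda>j. (1 / fact j) *\<^sub>R (iter_dderiv (replicate j h) f x, iter_dderiv (replicate j h) g x))
              sums (f (x + h), g (x + h)))"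
      using e1 e2 T1 T2
      by (intro exI[of _ "min e1 e2"]) (auto intro!: sums_Pair'[simplified])
  qed
qed

lemma sums_upto2: "(\<And>j. j \<ge> 3 \<Longrightarrow> a j = 0) \<Longrightarrow> s = a 0 + a 1 + a 2 \<Longrightarrow> a sums s"
proof -
  assume z: "\<And>j. j \<ge> 3 \<Longrightarrow> a j = 0" and s: "s = a 0 + a 1 + a 2"
  have "a sums (\<Sum>n\<in>{0,1,2}. a n)"
    by (rule sums_finite) (use z in auto)
  then show ?thesis by (simp add: s add.assoc)
qed

definition affF :: "'b \<Rightarrow> ('a \<Rightarrow> 'b) \<Rightarrow> 'a list \<Rightarrow> 'a \<Rightarrow> 'b::real_normed_vector" where
  "affF c L vs = (case vs of [] \<Rightarrow> (\<lambda>z. c + L z) | [v] \<Rightarrow> (\<lambda>z. L v) | _ \<Rightarrow> (\<lambda>z. 0))"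

lemma analytic_affine:
  fixes L :: "'a::euclidean_space \<Rightarrow> 'b::euclidean_space"
  assumes L: "bounded_linear L" and S: "open S"
  shows "real_analytic_on S (\<lambda>z. c + L z)"
proof (rule family_analytic[OF S, where F = "affF c L"])
  show "\<And>x. x \<in> S \<Longrightarrow> affF c L [] x = c + L x" by (simp add: affF_def)
  fix vs :: "'a list" and x
  show "(affF c L vs has_derivative (\<lambda>v. affF c L (v # vs) x)) (at x)"
  proof (cases vs)
    case Nil
    then show ?thesis
      by (simp add: affF_def) (rule has_derivative_eq_rhs[OF has_derivative_add[OF has_derivative_const bounded_linear_imp_has_derivative[OF L]]]; simp)
  next
    case (Cons w ws)
    then show ?thesis by (cases ws) (auto simp: affF_def)
  qed
next
  fix x assume x: "x \<in> S"
  obtain e where e: "e > 0" "ball x e \<subseteq> S" using S x open_contains_ball by blast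
  have "(\<lambda>j. (1 / fact j) *\<^sub>R affF c L (replicate j h) x) sums (c + L (x + h))" for h
  proof (rule sums_upto2)
    fix j :: nat assume "j \<ge> 3"
    then have "j = Suc (Suc (Suc (j - 3)))" by arith
    then obtain k where "j = Suc (Suc (Suc k))" by blast
    then show "(1 / fact j) *\<^sub>R affF c L (replicate j h) x = 0" by (simp add: affF_def)
  next
    show "c + L (x + h) = (1 / fact 0) *\<^sub>R affF c L (replicate 0 h) x +
        (1 / fact 1) *\<^sub>R affF c L (replicate 1 h) x + (1 / fact 2) *\<^sub>R affF c L (replicate 2 h) x"
      by (simp add: affF_def numeral_2_eq_2 linear_add[OF bounded_linear.linear[OF L]] add.assoc)
  qed
  then show "\<exists>e>0. ball x e \<subseteq> S \<and> (\<forall>h. norm h < e \<longrightarrow>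
           (\<lambda>j. (1 / fact j) *\<^sub>R affF c L (replicate j h) x) sums (c + L (x + h)))"
    using e by blast
qed

definition bilF :: "('c \<Rightarrow> 'd \<Rightarrow> 'b) \<Rightarrow> ('a \<Rightarrow> 'c) \<Rightarrow> ('a \<Rightarrow> 'd) \<Rightarrow> 'a list \<Rightarrow> 'a \<Rightarrow> 'b::real_normed_vector" where
  "bilF B L1 L2 vs = (case vs of [] \<Rightarrow> (\<lambda>z. B (L1 z) (L2 z))
      | [v] \<Rightarrow> (\<lambda>z. B (L1 v) (L2 z) + B (L1 z) (L2 v))
      | [w, v] \<Rightarrow> (\<lambda>z. B (L1 v) (L2 w) + B (L1 w) (L2 v))
      | _ \<Rightarrow> (\<lambda>z. 0))"

lemma analytic_bilinear:
  fixes L1 :: "'a::euclidean_space \<Rightarrow> 'c::real_normed_vector" and L2 :: "'a \<Rightarrow> 'd::real_normed_vector"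
    and B :: "'c \<Rightarrow> 'd \<Rightarrow> 'b::euclidean_space"
  assumes B: "bounded_bilinear B" and L1: "bounded_linear L1" and L2: "bounded_linear L2" and S: "open S"
  shows "real_analytic_on S (\<lambda>z. B (L1 z) (L2 z))"
proof (rule family_analytic[OF S, where F = "bilF B L1 L2"])
  show "\<And>x. x \<in> S \<Longrightarrow> bilF B L1 L2 [] x = B (L1 x) (L2 x)" by (simp add: bilF_def)
  fix vs :: "'a list" and x
  have dL1: "(L1 has_derivative L1) (at x)" by (rule bounded_linear.has_derivative[OF L1 has_derivative_ident])
  have dL2: "(L2 has_derivative L2) (at x)" by (rule bounded_linear.has_derivative[OF L2 has_derivative_ident])
  have dc: "((\<lambda>z. c) has_derivative (\<lambda>z. 0)) (at x)" for c :: 'c by simp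
  have dc2: "((\<lambda>z. c) has_derivative (\<lambda>z. 0)) (at x)" for c :: 'd by simp
  show "(bilF B L1 L2 vs has_derivative (\<lambda>v. bilF B L1 L2 (v # vs) x)) (at x)"
  proof (cases vs)
    case Nil
    show ?thesis unfolding Nil
      apply (simp add: bilF_def)
      apply (rule has_derivative_eq_rhs[OF bounded_bilinear.FDERIV[OF B dL1 dL2]])
      by (simp add: fun_eq_iff add.commute)
  next
    case (Cons w ws)
    note w = Cons
    show ?thesis
    proof (cases ws)
      case Nil
      show ?thesis unfolding w Nil
        apply (simp add: bilF_def)
        apply (rule has_derivative_eq_rhs[OF has_derivative_add[OF bounded_bilinear.FDERIV[OF B dc dL2] bounded_bilinear.FDERIV[OF B dL1 dc2]]])
        by (simp add: fun_eq_iff bounded_bilinear.zero_left[OF B] bounded_bilinear.zero_right[OF B] add.commute)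
    next
      case (Cons u us)
      then show ?thesis unfolding w by (cases us) (auto simp: bilF_def)
    qed
  qed
next
  fix x assume x: "x \<in> S"
  obtain e where e: "e > 0" "ball x e \<subseteq> S" using S x open_contains_ball by blast
  have "(\<lambda>j. (1 / fact j) *\<^sub>R bilF B L1 L2 (replicate j h) x) sums (B (L1 (x + h)) (L2 (x + h)))" for h
  proof (rule sums_upto2)
    fix j :: nat assume "j \<ge> 3"
    then have "j = Suc (Suc (Suc (j - 3)))" by arith
    then obtain k where "j = Suc (Suc (Suc k))" by blast
    then show "(1 / fact j) *\<^sub>R bilF B L1 L2 (replicate j h) x = 0" by (simp add: bilF_def)
  next
    have l1: "L1 (x + h) = L1 x + L1 h" by (rule linear_add[OF bounded_linear.linear[OF L1]])
    have l2: "L2 (x + h) = L2 x + L2 h" by (rule linear_add[OF bounded_linear.linear[OF L2]])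
    have two: "(1/2::real) *\<^sub>R (y + y) = y" for y :: 'b by (simp add: scaleR_add_right[symmetric] scaleR_2[symmetric])
    show "B (L1 (x + h)) (L2 (x + h)) = (1 / fact 0) *\<^sub>R bilF B L1 L2 (replicate 0 h) x +
        (1 / fact 1) *\<^sub>R bilF B L1 L2 (replicate 1 h) x + (1 / fact 2) *\<^sub>R bilF B L1 L2 (replicate 2 h) x"
    proof -
      have "B (L1 (x + h)) (L2 (x + h)) = B (L1 x) (L2 x) + (B (L1 h) (L2 x) + B (L1 x) (L2 h))
         + (1/2) *\<^sub>R (B (L1 h) (L2 h) + B (L1 h) (L2 h))"
        unfolding l1 l2 bounded_bilinear.add_left[OF B] bounded_bilinear.add_right[OF B] two
        by (simp only: add_ac)
      also have "\<dots> = (1 / fact 0) *\<^sub>R bilF B L1 L2 (replicate 0 h) x +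
        (1 / fact 1) *\<^sub>R bilF B L1 L2 (replicate 1 h) x + (1 / fact 2) *\<^sub>R bilF B L1 L2 (replicate 2 h) x"
        by (simp add: bilF_def numeral_2_eq_2)
      finally show ?thesis .
    qed
  qed
  then show "\<exists>e>0. ball x e \<subseteq> S \<and> (\<forall>h. norm h < e \<longrightarrow>
           (\<lambda>j. (1 / fact j) *\<^sub>R bilF B L1 L2 (replicate j h) x) sums (B (L1 (x + h)) (L2 (x + h))))"
    using e by blast
qed



fun wev :: "real^'n^'n \<Rightarrow> (real^'n^'n) list \<Rightarrow> real^'n^'n" where
  "wev Hi [] = mat 1"
| "wev Hi [A] = A"
| "wev Hi (A # B # ws) = A ** Hi ** wev Hi (B # ws)"

fun dw :: "real^'n^'n \<Rightarrow> (real^'n^'n) list \<Rightarrow> (real^'n^'n) list list" where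
  "dw v [] = []"
| "dw v [A] = []"
| "dw v (A # B # ws) = (A # v # B # ws) # map (Cons A) (dw v (B # ws))"

definition pev :: "real^'n^'n \<Rightarrow> (real^'n^'n) list list \<Rightarrow> real^'n^'n" where
  "pev Hi P = sum_list (map (wev Hi) P)"

definition pd :: "real^'n^'n \<Rightarrow> (real^'n^'n) list list \<Rightarrow> (real^'n^'n) list list" where
  "pd v P = concat (map (dw v) P)"

primrec polyof :: "('a \<Rightarrow> real^'n^'n) \<Rightarrow> 'a list \<Rightarrow> (real^'n^'n) list list" where
  "polyof P [] = [[mat 1, mat 1]]"
| "polyof P (v # vs) = pd (- P v) (polyof P vs)"

lemma dw_nonempty: "w \<in> set (dw v ws) \<Longrightarrow> w \<noteq> []"
  by (induction v ws rule: dw.induct) auto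

lemma wev_cons: "w \<noteq> [] \<Longrightarrow> wev Hi (A # w) = A ** Hi ** wev Hi w"
  by (cases w) auto

lemma sum_list_mm_left: "sum_list (map (\<lambda>w. C ** f w) xs) = C ** sum_list (map f xs)"
  by (induction xs) (auto simp: mm_simps matrix_add_ldistrib)

lemma pev_append: "pev Hi (xs @ ys) = pev Hi xs + pev Hi ys"
  by (simp add: pev_def)

lemma pev_concat: "pev Hi (concat xss) = sum_list (map (pev Hi) xss)"
  by (induction xss) (auto simp: pev_def)

lemma minv_comp_deriv:
  fixes P :: "'a::real_normed_vector \<Rightarrow> real^'n^'n"
  assumes P: "bounded_linear P" and inv: "invertible (P x)"
  shows "((\<lambda>z. matrix_inv (P z)) has_derivative
     (\<lambda>v. - (matrix_inv (P x) ** P v ** matrix_inv (P x)))) (at x)"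
  using has_derivative_compose[OF bounded_linear_imp_has_derivative[OF P] minv_deriv[OF inv]] .

lemma word_deriv:
  fixes P :: "'a::real_normed_vector \<Rightarrow> real^'n^'n"
  assumes P: "bounded_linear P" and inv: "invertible (P x)"
  shows "((\<lambda>z. wev (matrix_inv (P z)) ws) has_derivative
      (\<lambda>v. pev (matrix_inv (P x)) (dw (- P v) ws))) (at x)"
proof (induction ws rule: induct_list012)
  case 1 then show ?case by (simp add: pev_def)
next
  case (2 A) then show ?case by (simp add: pev_def)
next
  case (3 A B ws)
  define Hx where "Hx = matrix_inv (P x)"
  define W where "W = wev Hx (B # ws)"
  have d1: "((\<lambda>z. A ** matrix_inv (P z)) has_derivative
     (\<lambda>v. A ** (- (Hx ** P v ** Hx)))) (at x)"
    unfolding Hx_def by (rule bounded_linear.has_derivative[OF bl_lmul minv_comp_deriv[OF P inv]])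
  have d2: "((\<lambda>z. wev (matrix_inv (P z)) (B # ws)) has_derivative
      (\<lambda>v. pev Hx (dw (- P v) (B # ws)))) (at x)"
    using 3(2) unfolding Hx_def .
  have "((\<lambda>z. (A ** matrix_inv (P z)) ** wev (matrix_inv (P z)) (B # ws)) has_derivative
      (\<lambda>v. (A ** Hx) ** pev Hx (dw (- P v) (B # ws)) + (A ** (- (Hx ** P v ** Hx))) ** W)) (at x)"
    using bounded_bilinear.FDERIV[OF bb_mm d1 d2] by (simp add: Hx_def W_def)
  moreover have "(\<lambda>v. (A ** Hx) ** pev Hx (dw (- P v) (B # ws)) + (A ** (- (Hx ** P v ** Hx))) ** W)
     = (\<lambda>v. pev Hx (dw (- P v) (A # B # ws)))"
  proof
    fix v
    have ne: "\<And>w. w \<in> set (dw (- P v) (B # ws)) \<Longrightarrow> w \<noteq> []" by (rule dw_nonempty)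
    have "pev Hx (dw (- P v) (A # B # ws)) = wev Hx (A # - P v # B # ws)
        + sum_list (map (\<lambda>w. wev Hx (A # w)) (dw (- P v) (B # ws)))"
      by (simp add: pev_def o_def)
    also have "sum_list (map (\<lambda>w. wev Hx (A # w)) (dw (- P v) (B # ws)))
        = sum_list (map (\<lambda>w. (A ** Hx) ** wev Hx w) (dw (- P v) (B # ws)))"
      by (rule arg_cong[where f=sum_list], rule map_cong) (auto simp: wev_cons ne)
    also have "\<dots> = (A ** Hx) ** pev Hx (dw (- P v) (B # ws))"
      by (simp add: sum_list_mm_left pev_def)
    finally show "(A ** Hx) ** pev Hx (dw (- P v) (B # ws)) + (A ** (- (Hx ** P v ** Hx))) ** W
        = pev Hx (dw (- P v) (A # B # ws))"
      by (simp add: W_def mm_simps matrix_mul_assoc add.commute)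
  qed
  ultimately show ?case by (simp add: Hx_def)
qed

lemma pev_deriv:
  fixes P :: "'a::real_normed_vector \<Rightarrow> real^'n^'n"
  assumes P: "bounded_linear P" and inv: "invertible (P x)"
  shows "((\<lambda>z. pev (matrix_inv (P z)) Pl) has_derivative
      (\<lambda>v. pev (matrix_inv (P x)) (pd (- P v) Pl))) (at x)"
proof (induction Pl)
  case Nil then show ?case by (simp add: pev_def pd_def)
next
  case (Cons w Pl)
  have "((\<lambda>z. wev (matrix_inv (P z)) w + pev (matrix_inv (P z)) Pl) has_derivative
      (\<lambda>v. pev (matrix_inv (P x)) (dw (- P v) w) + pev (matrix_inv (P x)) (pd (- P v) Pl))) (at x)"
    by (rule has_derivative_add[OF word_deriv[OF P inv] Cons.IH])
  then show ?case by (simp add: pev_def pd_def)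
qed

lemma dw_rep: "dw v (a # replicate k v @ [d]) = replicate (Suc k) (a # replicate (Suc k) v @ [d])"
proof (induction k arbitrary: a)
  case 0 then show ?case by simp
next
  case (Suc k)
  have "dw v (a # replicate (Suc k) v @ [d]) = (a # v # v # (replicate k v @ [d])) # map (Cons a) (dw v (v # replicate k v @ [d]))"
    by simp
  also have "\<dots> = replicate (Suc (Suc k)) (a # replicate (Suc (Suc k)) v @ [d])"
    using Suc.IH[of v] by (simp add: replicate_append_same[symmetric])
  finally show ?case .
qed

lemma concat_rep_rep: "concat (replicate m (replicate n x)) = replicate (m * n) x"
  by (induction m) (auto simp: replicate_add)

lemma polyof_rep: "polyof P (replicate j h) = replicate (fact j) (mat 1 # replicate j (- P h) @ [mat 1])"
proof (induction j)
  case 0 then show ?case by simp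
next
  case (Suc j)
  have "polyof P (replicate (Suc j) h) = concat (map (dw (- P h)) (replicate (fact j) (mat 1 # replicate j (- P h) @ [mat 1])))"
    by (simp add: Suc.IH pd_def)
  also have "\<dots> = concat (replicate (fact j) (replicate (Suc j) (mat 1 # replicate (Suc j) (- P h) @ [mat 1])))"
    by (simp add: dw_rep)
  also have "\<dots> = replicate (fact (Suc j)) (mat 1 # replicate (Suc j) (- P h) @ [mat 1])"
    by (simp only: concat_rep_rep, simp add: mult.commute)
  finally show ?case .
qed

lemma pev_rep: "pev Hi (replicate m w) = real m *\<^sub>R wev Hi w"
  by (induction m) (auto simp: pev_def algebra_simps)

lemma wev_rep: "wev Hi (a # replicate j q @ [d]) = a ** mpow (Hi ** q) j ** Hi ** d"
proof (induction j arbitrary: a)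
  case 0 then show ?case by simp
next
  case (Suc j)
  have "wev Hi (a # replicate (Suc j) q @ [d]) = a ** Hi ** wev Hi (q # replicate j q @ [d])"
    by (simp add: wev_cons)
  then show ?case using Suc.IH[of q] by (simp add: matrix_mul_assoc)
qed



lemma sum_mm_right: "(\<Sum>j<(N::nat). f j ** (C::real^'n^'n)) = (\<Sum>j<N. f j) ** C"
  by (induction N) (auto simp: mm_simps matrix_add_rdistrib')

lemma tele: "(mat 1 - M) ** (\<Sum>j<N. mpow M j) = mat 1 - mpow (M::real^'n^'n) N"
proof (induction N)
  case 0 then show ?case by (simp add: mm_simps)
next
  case (Suc N)
  have "(mat 1 - M) ** (\<Sum>j<Suc N. mpow M j) = (mat 1 - M) ** (\<Sum>j<N. mpow M j) + (mat 1 - M) ** mpow M N"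
    by (simp add: matrix_add_ldistrib)
  also have "(mat 1 - M) ** mpow M N = mpow M N - mpow M (Suc N)"
    by (simp add: mm_simps)
  also have "(mat 1 - M) ** (\<Sum>j<N. mpow M j) = mat 1 - mpow M N" by (rule Suc.IH)
  also have "mat 1 - mpow M N + (mpow M N - mpow M (Suc N)) = mat 1 - mpow M (Suc N)"
    by simp
  finally show ?case .
qed

lemma norm_mpow: "norm (mpow (M::real^'n^'n) N) \<le> norm (mat 1 :: real^'n^'n) * norm M ^ N"
proof (induction N)
  case 0 then show ?case by simp
next
  case (Suc N)
  have "norm (mpow M (Suc N)) \<le> norm M * norm (mpow M N)" by (simp add: norm_mm_le)
  also have "\<dots> \<le> norm M * (norm (mat 1 :: real^'n^'n) * norm M ^ N)"
    using Suc.IH by (simp add: mult_left_mono)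
  finally show ?case by (simp add: algebra_simps)
qed

lemma mpow_lim0: "norm (M::real^'n^'n) < 1 \<Longrightarrow> (\<lambda>N. mpow M N) \<longlonglongrightarrow> 0"
proof -
  assume M: "norm M < 1"
  have "(\<lambda>N. norm (mat 1 :: real^'n^'n) * norm M ^ N) \<longlonglongrightarrow> 0"
    by (rule tendsto_mult_right_zero, rule LIMSEQ_power_zero) (use M in simp)
  then show ?thesis
    by (rule Lim_null_comparison[rotated]) (simp add: norm_mpow)
qed

lemma neumann:
  fixes H K :: "real^'n^'n"
  assumes H: "invertible H" and Hp: "invertible (H + K)"
    and M: "M = - (matrix_inv H ** K)" and nM: "norm M < 1"
  shows "(\<lambda>j. mpow M j ** matrix_inv H) sums matrix_inv (H + K)"
proof -
  define Hi where "Hi = matrix_inv H"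
  define Q where "Q = matrix_inv (H + K)"
  have HHi: "H ** Hi = mat 1" using minv_r[OF H] by (simp add: Hi_def)
  have QHp: "Q ** (H + K) = mat 1" using minv_l[OF Hp] by (simp add: Q_def)
  have HM: "H ** (mat 1 - M) = H + K"
    by (simp add: M mm_simps matrix_mul_assoc minv_r[OF H])
  have eq: "(\<Sum>j<N. mpow M j ** Hi) = Q - Q ** H ** mpow M N ** Hi" for N
  proof -
    have "(\<Sum>j<N. mpow M j ** Hi) = Q ** (H + K) ** (\<Sum>j<N. mpow M j) ** Hi"
      by (simp add: QHp sum_mm_right)
    also have "\<dots> = Q ** H ** ((mat 1 - M) ** (\<Sum>j<N. mpow M j)) ** Hi"
      by (simp add: HM[symmetric] matrix_mul_assoc)
    also have "\<dots> = Q ** (H ** Hi) - Q ** H ** mpow M N ** Hi"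
      unfolding tele by (simp add: mm_simps matrix_mul_assoc)
    finally show ?thesis by (simp add: HHi)
  qed
  have bl: "bounded_linear (\<lambda>T. Q ** H ** T ** Hi)"
    by (intro bounded_linear_compose[OF bl_rmul] bl_lmul)
  have "(\<lambda>N. Q ** H ** mpow M N ** Hi) \<longlonglongrightarrow> 0"
    by (rule bounded_linear.tendsto_zero[OF bl mpow_lim0[OF nM]])
  then have "(\<lambda>N. Q - Q ** H ** mpow M N ** Hi) \<longlonglongrightarrow> Q - 0"
    by (intro tendsto_diff tendsto_const)
  then show ?thesis unfolding sums_def eq Hi_def[symmetric] Q_def[symmetric] by simp
qed

lemma analytic_minv:
  fixes P :: "'a::euclidean_space \<Rightarrow> real^'n^'n"
  assumes P: "bounded_linear P" and S: "open S" and inv: "\<And>z. z \<in> S \<Longrightarrow> invertible (P z)"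
  shows "real_analytic_on S (\<lambda>z. matrix_inv (P z))"
proof (rule family_analytic[OF S, where F = "\<lambda>vs z. pev (matrix_inv (P z)) (polyof P vs)"])
  fix x assume x: "x \<in> S"
  show "pev (matrix_inv (P x)) (polyof P []) = matrix_inv (P x)" by (simp add: pev_def)
  fix vs
  show "((\<lambda>z. pev (matrix_inv (P z)) (polyof P vs)) has_derivative
      (\<lambda>v. pev (matrix_inv (P x)) (polyof P (v # vs)))) (at x)"
    using pev_deriv[OF P inv[OF x]] by simp
next
  fix x assume x: "x \<in> S"
  define Hi where "Hi = matrix_inv (P x)"
  obtain e0 where e0: "e0 > 0" "ball x e0 \<subseteq> S" using S x open_contains_ball by blast
  obtain K where K: "K > 0" "\<And>y. norm (P y) \<le> norm y * K" using bounded_linear.pos_bounded[OF P] by blast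
  have pos: "0 < (norm Hi + 1) * K" using K norm_ge_zero[of Hi] by (simp add: add_nonneg_pos)
  define e where "e = min e0 (1 / ((norm Hi + 1) * K))"
  have e: "e > 0" using e0 pos by (simp add: e_def)
  have T: "(\<lambda>j. (1 / fact j) *\<^sub>R pev (matrix_inv (P x)) (polyof P (replicate j h))) sums matrix_inv (P (x + h))"
    if h: "norm h < e" for h
  proof -
    have "x + h \<in> S" using h e0 by (auto simp: e_def dist_norm)
    then have ixh: "invertible (P x + P h)" using inv linear_add[OF bounded_linear.linear[OF P]] by metis
    define M where "M = - (Hi ** P h)"
    have "norm M \<le> norm Hi * norm (P h)" by (simp add: M_def norm_mm_le)
    also have "\<dots> \<le> (norm Hi + 1) * (norm h * K)"
      using K(2)[of h] by (intro mult_mono) auto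
    also have "\<dots> = norm h * ((norm Hi + 1) * K)" by simp
    also have "\<dots> < 1"
    proof -
      have "norm h < 1 / ((norm Hi + 1) * K)" using h by (simp add: e_def)
      then show ?thesis using pos by (simp add: field_simps)
    qed
    finally have nM: "norm M < 1" .
    have terms: "(1 / fact j) *\<^sub>R pev (matrix_inv (P x)) (polyof P (replicate j h)) = mpow M j ** Hi" for j
    proof -
      have "pev (matrix_inv (P x)) (polyof P (replicate j h)) = fact j *\<^sub>R (mpow M j ** Hi)"
        by (simp add: polyof_rep pev_rep wev_rep Hi_def M_def mm_simps)
      then show ?thesis by simp
    qed
    have "(\<lambda>j. mpow M j ** Hi) sums matrix_inv (P x + P h)"
      unfolding Hi_def by (rule neumann[OF inv[OF x] ixh _ nM]) (simp add: M_def Hi_def mm_simps)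
    then show ?thesis
      by (simp add: terms linear_add[OF bounded_linear.linear[OF P]] Hi_def)
  qed
  show "\<exists>e>0. ball x e \<subseteq> S \<and> (\<forall>h. norm h < e \<longrightarrow>
        (\<lambda>j. (1 / fact j) *\<^sub>R pev (matrix_inv (P x)) (polyof P (replicate j h))) sums matrix_inv (P (x + h)))"
    using e e0 T by (intro exI[of _ e]) (auto simp: e_def)
qed



lemma gram_invertible:
  fixes U :: "real^'r^'n"
  assumes "rank U = CARD('r)"
  shows "invertible (transpose U ** U)"
proof -
  have inj: "inj ((*v) U)" using assms full_rank_injective by blast
  have "\<forall>x. (transpose U ** U) *v x = 0 \<longrightarrow> x = 0"
  proof (intro allI impI)
    fix x :: "real^'r" assume "(transpose U ** U) *v x = 0"
    then have "inner x ((transpose U ** U) *v x) = 0" by simp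
    moreover have "inner x ((transpose U ** U) *v x) = inner (U *v x) (U *v x)"
      using dot_lmul_matrix[of x "transpose U" "U *v x"]
      by (simp add: matrix_vector_mul_assoc[symmetric] del: transpose_matrix_vector)
    ultimately have "U *v x = 0" by simp
    then show "x = 0" using inj by (metis injD matrix_vector_mult_0_right)
  qed
  then show ?thesis using matrix_left_invertible_ker invertible_left_inverse by blast
qed

lemma pinv_left:
  fixes U :: "real^'r^'n"
  assumes "rank U = CARD('r)"
  shows "pinv U ** U = mat 1"
  unfolding pinv_def using minv_l[OF gram_invertible[OF assms]] by (simp add: matrix_mul_assoc)

lemma pinv_orth:
  fixes U :: "real^'r^'n" and W :: "real^'p^'n"
  assumes "transpose U ** W = 0"
  shows "pinv U ** W = 0"
  unfolding pinv_def using assms by (simp add: matrix_mul_assoc[symmetric] mm_simps)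

lemma transpose_zero': "transpose (0::real^'a^'b) = 0"
  by (simp add: transpose_def vec_eq_iff)

locale UVsetup =
  fixes U :: "real^'r^'n" and Uperp :: "real^'p^'n"
    and V :: "real^'r^'m" and Vperp :: "real^'q^'m"
  assumes LU: "pinv U ** U = mat 1" and LUo: "pinv U ** Uperp = 0"
    and LUp: "pinv Uperp ** Uperp = mat 1" and LUpo: "pinv Uperp ** U = 0"
    and LV: "pinv V ** V = mat 1" and LVo: "pinv V ** Vperp = 0"
    and LVp: "pinv Vperp ** Vperp = mat 1" and LVpo: "pinv Vperp ** V = 0"
begin

abbreviation th where "th \<equiv> thetainv U Uperp V Vperp"

lemma th_eq: "th (X, Y, H) = (U + Uperp ** X) ** H ** transpose (V + Vperp ** Y)"
  by (simp add: thetainv_def)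

lemma A1: "pinv U ** (U + Uperp ** X) = mat 1"
  by (simp add: matrix_add_ldistrib matrix_mul_assoc LU LUo mm_simps)
lemma A2: "pinv Uperp ** (U + Uperp ** X) = X"
  by (simp add: matrix_add_ldistrib matrix_mul_assoc LUp LUpo mm_simps)
lemma B1: "transpose (V + Vperp ** Y) ** transpose (pinv V) = mat 1"
  by (simp add: matrix_transpose_mul[symmetric] matrix_add_ldistrib matrix_mul_assoc LV LVo mm_simps)
lemma B2: "transpose (V + Vperp ** Y) ** transpose (pinv Vperp) = transpose Y"
  by (simp add: matrix_transpose_mul[symmetric] matrix_add_ldistrib matrix_mul_assoc LVp LVpo mm_simps)

lemma reassoc: "L ** (A ** H ** B) ** R = (L ** A) ** H ** (B ** R)"
  by (simp add: matrix_mul_assoc)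

lemma proj1: "pinv U ** th (X, Y, H) ** transpose (pinv V) = H"
  unfolding th_eq reassoc A1 B1 by simp
lemma proj2: "pinv Uperp ** th (X, Y, H) ** transpose (pinv V) = X ** H"
  unfolding th_eq reassoc A2 B1 by simp
lemma proj3: "pinv U ** th (X, Y, H) ** transpose (pinv Vperp) = H ** transpose Y"
  unfolding th_eq reassoc A1 B2 by simp

lemma th_inj: "inj_on th param_dom"
proof (rule inj_onI)
  fix a b assume a: "a \<in> param_dom" and b: "b \<in> param_dom" and eq: "th a = th b"
  obtain X Y H where aa: "a = (X, Y, H)" by (cases a) auto
  obtain X' Y' H' where bb: "b = (X', Y', H')" by (cases b) auto
  have iH: "invertible H" using a by (simp add: aa param_dom_def GL_def)
  have HH: "H = H'" using proj1[of X Y H] proj1[of X' Y' H'] eq by (simp add: aa bb)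
  have "X ** H = X' ** H" using proj2[of X Y H] proj2[of X' Y' H'] eq by (simp add: aa bb HH)
  then have "X ** H ** matrix_inv H = X' ** H ** matrix_inv H" by simp
  then have XX: "X = X'" by (simp add: matrix_mul_assoc[symmetric] minv_r[OF iH])
  have "H ** transpose Y = H ** transpose Y'" using proj3[of X Y H] proj3[of X' Y' H'] eq by (simp add: aa bb HH)
  then have "matrix_inv H ** (H ** transpose Y) = matrix_inv H ** (H ** transpose Y')" by simp
  then have "transpose Y = transpose Y'" by (simp add: matrix_mul_assoc minv_l[OF iH])
  then have "Y = Y'" by (metis transpose_transpose)
  then show "a = b" using XX HH by (simp add: aa bb)
qed

abbreviation thZ where "thZ \<equiv> thetaZ U Uperp V Vperp"
abbreviation UZs where "UZs \<equiv> UZ U Uperp V Vperp"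

lemma thZ_th: "a \<in> param_dom \<Longrightarrow> thZ (th a) = a"
  unfolding thetaZ_def by (rule inv_into_f_f[OF th_inj])

lemma th_in: "a \<in> param_dom \<Longrightarrow> th a \<in> UZs"
  by (simp add: UZ_def)

lemma UZ_cases: "A \<in> UZs \<Longrightarrow> \<exists>a\<in>param_dom. A = th a"
  by (auto simp: UZ_def)

lemma bij_th: "bij_betw th param_dom UZs"
  by (simp add: bij_betw_def th_inj UZ_def)

lemma bij_thZ: "bij_betw thZ UZs param_dom"
  unfolding thetaZ_def by (rule bij_betw_inv_into[OF bij_th])

lemma inv_thZ: "a \<in> param_dom \<Longrightarrow> inv_into UZs thZ a = th a"
  by (rule inv_into_f_eq[OF bij_betw_imp_inj_on[OF bij_thZ] th_in thZ_th])

lemma star_th: "a \<in> param_dom \<Longrightarrow> b \<in> param_dom \<Longrightarrow>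
   starZ U Uperp V Vperp (th a) (th b) = th (fst a + fst b, fst (snd a) + fst (snd b), snd (snd a) ** snd (snd b))"
  by (simp add: starZ_def thZ_th split: prod.splits)

lemma pd_mult: "a \<in> param_dom \<Longrightarrow> b \<in> param_dom \<Longrightarrow>
   (fst a + fst b, fst (snd a) + fst (snd b), snd (snd a) ** snd (snd b)) \<in> param_dom"
  by (auto simp: param_dom_def GL_def intro: invertible_mult)

lemma one_th: "U ** transpose V = th (0, 0, mat 1)"
  by (simp add: th_eq)

lemma one_pd: "(0, 0, mat 1) \<in> param_dom"
  by (simp add: param_dom_def GL_def invertible_def)

definition GZ where "GZ = \<lparr>carrier = UZs, mult = starZ U Uperp V Vperp, one = U ** transpose V\<rparr>"

lemma GZ_group: "group GZ"
proof (rule groupI)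
  fix x y assume "x \<in> carrier GZ" "y \<in> carrier GZ"
  then obtain a b where a: "a \<in> param_dom" "x = th a" and b: "b \<in> param_dom" "y = th b"
    by (auto simp: GZ_def dest!: UZ_cases)
  show "x \<otimes>\<^bsub>GZ\<^esub> y \<in> carrier GZ"
    using a b by (simp add: GZ_def star_th th_in pd_mult)
next
  show "\<one>\<^bsub>GZ\<^esub> \<in> carrier GZ" by (simp add: GZ_def one_th th_in one_pd)
next
  fix x y z assume "x \<in> carrier GZ" "y \<in> carrier GZ" "z \<in> carrier GZ"
  then obtain a b c where a: "a \<in> param_dom" "x = th a" and b: "b \<in> param_dom" "y = th b"
      and c: "c \<in> param_dom" "z = th c"
    by (auto simp: GZ_def dest!: UZ_cases)
  show "x \<otimes>\<^bsub>GZ\<^esub> y \<otimes>\<^bsub>GZ\<^esub> z = x \<otimes>\<^bsub>GZ\<^esub> (y \<otimes>\<^bsub>GZ\<^esub> z)"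
    using a b c by (simp add: GZ_def star_th pd_mult add.assoc matrix_mul_assoc)
next
  fix x assume "x \<in> carrier GZ"
  then obtain a where a: "a \<in> param_dom" "x = th a" by (auto simp: GZ_def dest!: UZ_cases)
  show "\<one>\<^bsub>GZ\<^esub> \<otimes>\<^bsub>GZ\<^esub> x = x"
    using a by (simp add: GZ_def one_th star_th one_pd)
next
  fix x assume "x \<in> carrier GZ"
  then obtain a where a: "a \<in> param_dom" "x = th a" by (auto simp: GZ_def dest!: UZ_cases)
  define b where "b = (- fst a, - fst (snd a), matrix_inv (snd (snd a)))"
  have b: "b \<in> param_dom" using a by (auto simp: b_def param_dom_def GL_def minv_invertible)
  have "th b \<otimes>\<^bsub>GZ\<^esub> x = \<one>\<^bsub>GZ\<^esub>"
    using a b by (auto simp: GZ_def star_th one_th b_def minv_l param_dom_def GL_def)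
  then show "\<exists>y\<in>carrier GZ. y \<otimes>\<^bsub>GZ\<^esub> x = \<one>\<^bsub>GZ\<^esub>"
    using b by (auto simp: GZ_def th_in)
qed

lemma GZ_inv: "a \<in> param_dom \<Longrightarrow> m_inv GZ (th a) = th (- fst a, - fst (snd a), matrix_inv (snd (snd a)))"
proof -
  assume a: "a \<in> param_dom"
  define b where "b = (- fst a, - fst (snd a), matrix_inv (snd (snd a)))"
  have b: "b \<in> param_dom" using a by (auto simp: b_def param_dom_def GL_def minv_invertible)
  have "th b \<otimes>\<^bsub>GZ\<^esub> th a = \<one>\<^bsub>GZ\<^esub>"
    using a b by (auto simp: GZ_def star_th one_th b_def minv_l param_dom_def GL_def)
  then show ?thesis
    using group.inv_equality[OF GZ_group] a b by (auto simp: GZ_def th_in b_def)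
qed

end



lemma mexp_nil: "(N::real^'n^'n) ** N = 0 \<Longrightarrow> mexp N = mat 1 + N"
proof -
  assume NN: "N ** N = 0"
  have z: "mpow N (Suc (Suc k)) = 0" for k
    by (simp add: matrix_mul_assoc NN mm_simps)
  have "(\<lambda>k. (1 / fact k) *\<^sub>R mpow N k) sums (mat 1 + N)"
  proof (rule sums_upto2)
    fix j :: nat assume "j \<ge> 3"
    then have "j = Suc (Suc (j - 2))" by arith
    then obtain k where "j = Suc (Suc k)" by blast
    then show "(1 / fact j) *\<^sub>R mpow N j = 0" using z[of k] by simp
  next
    show "mat 1 + N = (1 / fact 0) *\<^sub>R mpow N 0 + (1 / fact 1) *\<^sub>R mpow N 1 + (1 / fact 2) *\<^sub>R mpow N 2"
      using z[of 0] by (simp add: numeral_2_eq_2)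
  qed
  then show ?thesis unfolding mexp_def by (rule sums_unique[symmetric])
qed

lemma analytic_linear: "bounded_linear L \<Longrightarrow> open S \<Longrightarrow> real_analytic_on S L"
  by (rule analytic_cong[OF analytic_affine[of L S 0]]) auto

context UVsetup
begin

definition NU where "NU X = Uperp ** X ** pinv U"
definition NV where "NV Y = Vperp ** Y ** pinv V"

lemma zU: "Z ** pinv U ** Uperp = 0" by (simp add: matrix_mul_assoc[symmetric] LUo mm_simps)
lemma zV: "Z ** pinv V ** Vperp = 0" by (simp add: matrix_mul_assoc[symmetric] LVo mm_simps)

lemma NU_mult: "NU X ** NU X' = 0"
  by (simp add: NU_def matrix_mul_assoc zU mm_simps)
lemma NV_mult: "NV Y ** NV Y' = 0"
  by (simp add: NV_def matrix_mul_assoc zV mm_simps)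

lemma mexp_NU: "mexp (NU X) = mat 1 + NU X" by (rule mexp_nil[OF NU_mult])
lemma mexp_NV: "mexp (NV Y) = mat 1 + NV Y" by (rule mexp_nil[OF NV_mult])

lemma NU_add: "NU (X + X') = NU X + NU X'" by (simp add: NU_def matrix_add_ldistrib matrix_add_rdistrib')
lemma NV_add: "NV (Y + Y') = NV Y + NV Y'" by (simp add: NV_def matrix_add_ldistrib matrix_add_rdistrib')

lemma NU_inv: "pinv Uperp ** NU X ** U = X"
  by (simp add: NU_def matrix_mul_assoc[symmetric]) (simp add: matrix_mul_assoc LUp LU)
lemma NV_inv: "pinv Vperp ** NV Y ** V = Y"
  by (simp add: NV_def matrix_mul_assoc[symmetric]) (simp add: matrix_mul_assoc LVp LV)

abbreviation et where "et \<equiv> etaZ U Uperp V Vperp"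

lemma et_th: "(X, Y, H) \<in> param_dom \<Longrightarrow> et (th (X, Y, H)) = (mat 1 + NU X, mat 1 + NV Y, H)"
  by (simp add: etaZ_def thZ_th mexp_NU[unfolded NU_def] mexp_NV[unfolded NV_def] NU_def NV_def)

lemma one_plus_mult: "(mat 1 + A) ** (mat 1 + B) = mat 1 + (A + B) + A ** B"
  by (simp add: matrix_add_ldistrib matrix_add_rdistrib' add.assoc)

abbreviation Tgt where "Tgt \<equiv> mat_grp (GW U Uperp) \<times>\<times> mat_grp (GW V Vperp) \<times>\<times> mat_grp GL"

lemma GWU_mem: "mat 1 + NU X \<in> GW U Uperp"
  unfolding GW_def by (rule range_eqI[of _ _ X]) (simp add: mexp_NU[unfolded NU_def] NU_def)
lemma GWV_mem: "mat 1 + NV Y \<in> GW V Vperp"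
  unfolding GW_def by (rule range_eqI[of _ _ Y]) (simp add: mexp_NV[unfolded NV_def] NV_def)

lemma et_hom: "et \<in> hom GZ Tgt"
proof (rule homI)
  fix x assume "x \<in> carrier GZ"
  then obtain a where a: "a \<in> param_dom" "x = th a" by (auto simp: GZ_def dest!: UZ_cases)
  obtain X Y H where aa: "a = (X, Y, H)" by (cases a) auto
  show "et x \<in> carrier Tgt"
    using a by (auto simp: aa et_th mat_grp_def GWU_mem GWV_mem param_dom_def)
next
  fix x y assume "x \<in> carrier GZ" "y \<in> carrier GZ"
  then obtain a b where a: "a \<in> param_dom" "x = th a" and b: "b \<in> param_dom" "y = th b"
    by (auto simp: GZ_def dest!: UZ_cases)
  obtain X Y H where aa: "a = (X, Y, H)" by (cases a) auto
  obtain X' Y' H' where bb: "b = (X', Y', H')" by (cases b) auto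
  have ab: "(X + X', Y + Y', H ** H') \<in> param_dom" using pd_mult[OF a(1) b(1)] by (simp add: aa bb)
  show "et (x \<otimes>\<^bsub>GZ\<^esub> y) = et x \<otimes>\<^bsub>Tgt\<^esub> et y"
    using a b ab by (simp add: GZ_def aa bb star_th et_th mat_grp_def one_plus_mult NU_mult NV_mult NU_add NV_add)
qed

lemma NU_inj: "NU X = NU X' \<Longrightarrow> X = X'" using NU_inv by metis
lemma NV_inj: "NV Y = NV Y' \<Longrightarrow> Y = Y'" using NV_inv by metis

lemma et_inj: "inj_on et UZs"
proof (rule inj_onI)
  fix x y assume "x \<in> UZs" "y \<in> UZs" and eq: "et x = et y"
  then obtain a b where a: "a \<in> param_dom" "x = th a" and b: "b \<in> param_dom" "y = th b"
    by (auto dest!: UZ_cases)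
  obtain X Y H where aa: "a = (X, Y, H)" by (cases a) auto
  obtain X' Y' H' where bb: "b = (X', Y', H')" by (cases b) auto
  have "NU X = NU X'" "NV Y = NV Y'" and HH: "H = H'" using eq a b by (auto simp: aa bb et_th)
  then have "X = X'" "Y = Y'" using NU_inj NV_inj by blast+
  then show "x = y" using a b HH by (simp add: aa bb)
qed

lemma et_image: "et ` UZs = GW U Uperp \<times> GW V Vperp \<times> GL"
proof
  show "et ` UZs \<subseteq> GW U Uperp \<times> GW V Vperp \<times> GL"
    using hom_carrier[OF et_hom] by (simp add: GZ_def mat_grp_def)
next
  show "GW U Uperp \<times> GW V Vperp \<times> GL \<subseteq> et ` UZs"
  proof
    fix z assume "z \<in> GW U Uperp \<times> GW V Vperp \<times> (GL :: (real^'r^'r) set)"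
    then obtain X Y and H :: "real^'r^'r" where z: "z = (mexp (Uperp ** X ** pinv U), mexp (Vperp ** Y ** pinv V), H)" and H: "H \<in> GL"
      by (auto simp: GW_def)
    have p: "(X, Y, H) \<in> param_dom" using H by (simp add: param_dom_def)
    have "z = et (th (X, Y, H))"
      using p by (simp add: z et_th mexp_NU[unfolded NU_def] mexp_NV[unfolded NV_def] NU_def NV_def)
    then show "z \<in> et ` UZs" using th_in[OF p] by blast
  qed
qed

lemma et_iso: "et \<in> iso GZ Tgt"
  unfolding iso_def using et_hom et_inj et_image by (simp add: bij_betw_def GZ_def mat_grp_def)

lemma bl_NU: "bounded_linear (\<lambda>a. NU (f a))" if "bounded_linear f"
  unfolding NU_def by (rule bounded_linear_compose[OF bl_rmul, OF bounded_linear_compose[OF bl_lmul that]])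
lemma bl_NV: "bounded_linear (\<lambda>a. NV (f a))" if "bounded_linear f"
  unfolding NV_def by (rule bounded_linear_compose[OF bl_rmul, OF bounded_linear_compose[OF bl_lmul that]])

lemma open_pd: "open param_dom"
  unfolding param_dom_def GL_def by (intro open_Times open_UNIV open_GL)

lemma et_analytic: "real_analytic_on param_dom (\<lambda>a. et (th a))"
proof (rule analytic_cong[OF analytic_affine[OF _ open_pd]])
  show "bounded_linear (\<lambda>a::(real^'r^'p) \<times> (real^'r^'q) \<times> (real^'r^'r). (NU (fst a), NV (fst (snd a)), snd (snd a)))"
    by (intro bounded_linear_Pair bl_NU bl_NV bounded_linear_fst bounded_linear_compose[OF bounded_linear_fst bounded_linear_snd]
        bounded_linear_compose[OF bounded_linear_snd bounded_linear_snd])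
  fix a :: "(real^'r^'p) \<times> (real^'r^'q) \<times> (real^'r^'r)" assume a: "a \<in> param_dom"
  obtain X Y H where aa: "a = (X, Y, H)" by (cases a) auto
  show "(mat 1, mat 1, 0) + (NU (fst a), NV (fst (snd a)), snd (snd a)) = et (th a)"
    using a by (simp add: aa et_th)
qed

end



context UVsetup
begin

lemma mult_analytic:
  "real_analytic_on (param_dom \<times> param_dom)
     (\<lambda>z. thZ (starZ U Uperp V Vperp (inv_into UZs thZ (fst z)) (inv_into UZs thZ (snd z))))"
proof -
  have o: "open (param_dom \<times> param_dom)" by (intro open_Times open_pd)
  have l1: "bounded_linear (\<lambda>z::((real^'r^'p) \<times> (real^'r^'q) \<times> (real^'r^'r)) \<times> ((real^'r^'p) \<times> (real^'r^'q) \<times> (real^'r^'r)). fst (fst z) + fst (snd z))"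
    by (intro bounded_linear_add bounded_linear_compose[OF bounded_linear_fst] bounded_linear_fst bounded_linear_snd)
  have l2: "bounded_linear (\<lambda>z::((real^'r^'p) \<times> (real^'r^'q) \<times> (real^'r^'r)) \<times> ((real^'r^'p) \<times> (real^'r^'q) \<times> (real^'r^'r)). fst (snd (fst z)) + fst (snd (snd z)))"
    by (intro bounded_linear_add bounded_linear_compose[OF bounded_linear_fst] bounded_linear_compose[OF bounded_linear_snd] bounded_linear_fst bounded_linear_snd)
  have l3: "bounded_linear (\<lambda>z::((real^'r^'p) \<times> (real^'r^'q) \<times> (real^'r^'r)) \<times> ((real^'r^'p) \<times> (real^'r^'q) \<times> (real^'r^'r)). snd (snd (fst z)))"
    by (intro bounded_linear_compose[OF bounded_linear_snd] bounded_linear_fst)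
  have l4: "bounded_linear (\<lambda>z::((real^'r^'p) \<times> (real^'r^'q) \<times> (real^'r^'r)) \<times> ((real^'r^'p) \<times> (real^'r^'q) \<times> (real^'r^'r)). snd (snd (snd z)))"
    by (intro bounded_linear_compose[OF bounded_linear_snd] bounded_linear_snd)
  have A: "real_analytic_on (param_dom \<times> param_dom)
     (\<lambda>z::((real^'r^'p) \<times> (real^'r^'q) \<times> (real^'r^'r)) \<times> ((real^'r^'p) \<times> (real^'r^'q) \<times> (real^'r^'r)). (fst (fst z) + fst (snd z), fst (snd (fst z)) + fst (snd (snd z)), snd (snd (fst z)) ** snd (snd (snd z))))"
    using analytic_pair[OF analytic_linear[OF l1 o] analytic_pair[OF analytic_linear[OF l2 o] analytic_bilinear[OF bb_mm l3 l4 o]]]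
    by simp
  show ?thesis
  proof (rule analytic_cong[OF A])
    fix z :: "((real^'r^'p) \<times> (real^'r^'q) \<times> (real^'r^'r)) \<times> ((real^'r^'p) \<times> (real^'r^'q) \<times> (real^'r^'r))"
    assume z: "z \<in> param_dom \<times> param_dom"
    then have a: "fst z \<in> param_dom" and b: "snd z \<in> param_dom" by auto
    show "(fst (fst z) + fst (snd z), fst (snd (fst z)) + fst (snd (snd z)), snd (snd (fst z)) ** snd (snd (snd z)))
       = thZ (starZ U Uperp V Vperp (inv_into UZs thZ (fst z)) (inv_into UZs thZ (snd z)))"
      by (simp add: inv_thZ[OF a] inv_thZ[OF b] star_th[OF a b] thZ_th[OF pd_mult[OF a b]])
  qed
qed

lemma inv_analytic:
  "real_analytic_on param_dom (\<lambda>a. thZ (m_inv GZ (inv_into UZs thZ a)))"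
proof -
  have l1: "bounded_linear (\<lambda>a::(real^'r^'p) \<times> (real^'r^'q) \<times> (real^'r^'r). - fst a)"
    by (intro bounded_linear_minus bounded_linear_fst)
  have l2: "bounded_linear (\<lambda>a::(real^'r^'p) \<times> (real^'r^'q) \<times> (real^'r^'r). - fst (snd a))"
    by (intro bounded_linear_minus bounded_linear_compose[OF bounded_linear_fst] bounded_linear_snd)
  have l3: "bounded_linear (\<lambda>a::(real^'r^'p) \<times> (real^'r^'q) \<times> (real^'r^'r). snd (snd a))"
    by (intro bounded_linear_compose[OF bounded_linear_snd] bounded_linear_snd)
  have iv: "\<And>a. a \<in> param_dom \<Longrightarrow> invertible (snd (snd a))"
    by (auto simp: param_dom_def GL_def)
  have A: "real_analytic_on param_dom (\<lambda>a::(real^'r^'p) \<times> (real^'r^'q) \<times> (real^'r^'r). (- fst a, - fst (snd a), matrix_inv (snd (snd a))))"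
    using analytic_pair[OF analytic_linear[OF l1 open_pd] analytic_pair[OF analytic_linear[OF l2 open_pd] analytic_minv[OF l3 open_pd iv]]]
    by simp
  show ?thesis
  proof (rule analytic_cong[OF A])
    fix a :: "(real^'r^'p) \<times> (real^'r^'q) \<times> (real^'r^'r)"
    assume a: "a \<in> param_dom"
    have b: "(- fst a, - fst (snd a), matrix_inv (snd (snd a))) \<in> param_dom"
      using a by (auto simp: param_dom_def GL_def minv_invertible)
    show "(- fst a, - fst (snd a), matrix_inv (snd (snd a))) = thZ (m_inv GZ (inv_into UZs thZ a))"
      by (simp add: inv_thZ[OF a] GZ_inv[OF a] thZ_th[OF b])
  qed
qed

lemma chart: "lie_group_chart UZs (starZ U Uperp V Vperp) (U ** transpose V) thZ param_dom"
  unfolding lie_group_chart_def GZ_def[symmetric]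
  using open_pd bij_thZ GZ_group mult_analytic inv_analytic by blast

lemma sub_analytic:
  "analytic_on_subset (GW U Uperp \<times> GW V Vperp \<times> GL) (\<lambda>y. thZ (inv_into UZs et y))"
  unfolding analytic_on_subset_def
proof (intro ballI)
  fix y assume "y \<in> GW U Uperp \<times> GW V Vperp \<times> (GL :: (real^'r^'r) set)"
  define L where "L = (\<lambda>z::(real^'n^'n) \<times> (real^'m^'m) \<times> (real^'r^'r).
      (pinv Uperp ** fst z ** U, pinv Vperp ** fst (snd z) ** V, snd (snd z)))"
  have bl: "bounded_linear L"
    unfolding L_def
    by (intro bounded_linear_Pair bounded_linear_compose[OF bl_rmul] bounded_linear_compose[OF bl_lmul]
         bounded_linear_fst bounded_linear_compose[OF bounded_linear_fst bounded_linear_snd]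
         bounded_linear_compose[OF bounded_linear_snd bounded_linear_snd])
  have an: "real_analytic_on UNIV L" by (rule analytic_linear[OF bl open_UNIV])
  have eq: "\<forall>z\<in>UNIV \<inter> (GW U Uperp \<times> GW V Vperp \<times> GL). L z = thZ (inv_into UZs et z)"
  proof
    fix z assume "z \<in> UNIV \<inter> (GW U Uperp \<times> GW V Vperp \<times> (GL :: (real^'r^'r) set))"
    then obtain X Y and H :: "real^'r^'r" where z: "z = (mexp (Uperp ** X ** pinv U), mexp (Vperp ** Y ** pinv V), H)" and H: "H \<in> GL"
      by (auto simp: GW_def)
    have p: "(X, Y, H) \<in> param_dom" using H by (simp add: param_dom_def)
    have z2: "z = et (th (X, Y, H))"
      using p by (simp add: z et_th mexp_NU[unfolded NU_def] mexp_NV[unfolded NV_def] NU_def NV_def)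
    have "inv_into UZs et z = th (X, Y, H)"
      by (rule inv_into_f_eq[OF et_inj th_in[OF p] z2[symmetric]])
    then have r: "thZ (inv_into UZs et z) = (X, Y, H)" by (simp add: thZ_th[OF p])
    have "L z = (X, Y, H)"
      using p by (simp add: z2 et_th L_def matrix_add_ldistrib matrix_add_rdistrib' LUpo LVpo NU_inv NV_inv mm_simps)
    then show "L z = thZ (inv_into UZs et z)" using r by simp
  qed
  show "\<exists>W g. open W \<and> y \<in> W \<and> real_analytic_on W g \<and>
      (\<forall>z\<in>W \<inter> (GW U Uperp \<times> GW V Vperp \<times> GL). g z = thZ (inv_into UZs et z))"
    using an eq by (intro exI[of _ UNIV] exI[of _ L]) auto
qed

end

theorem mainTheorem17:
  fixes U :: "real^'r^'n" and Uperp :: "real^'p^'n"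
    and V :: "real^'r^'m" and Vperp :: "real^'q^'m"
    and G :: "real^'r^'r" and Z :: "real^'m^'n"
  assumes "0 < CARD('r)" and "CARD('r) < min CARD('n) CARD('m)"
    and "CARD('p) = CARD('n) - CARD('r)" and "CARD('q) = CARD('m) - CARD('r)"
    and "rank U = CARD('r)" and "rank V = CARD('r)"
    and "rank Uperp = CARD('n) - CARD('r)" and "rank Vperp = CARD('m) - CARD('r)"
    and "transpose U ** Uperp = 0" and "transpose V ** Vperp = 0"
    and "invertible G" and "Z = U ** G ** transpose V"
  shows "lie_group_chart (UZ U Uperp V Vperp) (starZ U Uperp V Vperp) (U ** transpose V)
            (thetaZ U Uperp V Vperp) param_dom
       \<and> etaZ U Uperp V Vperp \<in>
            iso \<lparr>carrier = UZ U Uperp V Vperp, mult = starZ U Uperp V Vperp, one = U ** transpose V\<rparr>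
                (mat_grp (GW U Uperp) \<times>\<times> mat_grp (GW V Vperp) \<times>\<times> mat_grp GL)
       \<and> real_analytic_on param_dom (\<lambda>a. etaZ U Uperp V Vperp (thetainv U Uperp V Vperp a))
       \<and> analytic_on_subset (GW U Uperp \<times> GW V Vperp \<times> GL)
            (\<lambda>y. thetaZ U Uperp V Vperp (inv_into (UZ U Uperp V Vperp) (etaZ U Uperp V Vperp) y))"
proof -
  have tU: "transpose Uperp ** U = 0"
    using arg_cong[OF assms(9), of transpose] by (simp add: matrix_transpose_mul transpose_zero')
  have tV: "transpose Vperp ** V = 0"
    using arg_cong[OF assms(10), of transpose] by (simp add: matrix_transpose_mul transpose_zero')
  interpret S: UVsetup U Uperp V Vperp
  proof
    show "pinv U ** U = mat 1" by (rule pinv_left[OF assms(5)])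
    show "pinv U ** Uperp = 0" by (rule pinv_orth[OF assms(9)])
    show "pinv Uperp ** Uperp = mat 1" by (rule pinv_left) (use assms(3,7) in simp)
    show "pinv Uperp ** U = 0" by (rule pinv_orth[OF tU])
    show "pinv V ** V = mat 1" by (rule pinv_left[OF assms(6)])
    show "pinv V ** Vperp = 0" by (rule pinv_orth[OF assms(10)])
    show "pinv Vperp ** Vperp = mat 1" by (rule pinv_left) (use assms(4,8) in simp)
    show "pinv Vperp ** V = 0" by (rule pinv_orth[OF tV])
  qed
  show ?thesis
    using S.chart S.et_iso S.et_analytic S.sub_analytic by (simp add: S.GZ_def)
qed

end
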